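(* For any $c_1<0$ and $c_2>0$, there exist connected graphs $G_1,G_2$ and non-cut edges $e_1$ of $G_1$ and $e_2$ of $G_2$ such that $z_c(G_1;e_1)<c_1$ and $z_c(G_2;e_2)>c_2$.
   Context: Zero forcing: given a graph $G$ and a set $S$ of initially colored vertices, if a colored vertex $u$ has exactly one uncolored neighbor $v$, then $v$ becomes colored. $S$ is a zero forcing set if repeated application colors all vertices. A connected forcing set is a zero forcing set $S$ with $G[S]$ connected; $Z_c(G)$ is the minimum size of a connected forcing set of a connected graph $G$. For a connected graph $G$ and an edge $e$ of $G$ that is not a cut edge, the connected forcing spread of $e$ is $z_c(G;e)=Z_c(G)-Z_c(G-e)$. *)

theory Defs
  imports Complex_Main
begin

definition simple_graph :: "'a set \<Rightarrow> 'a set set \<Rightarrow> bool" where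
  "simple_graph V E \<longleftrightarrow> finite V \<and> (\<forall>e\<in>E. e \<subseteq> V \<and> card e = 2)"

definition connected_on :: "'a set set \<Rightarrow> 'a set \<Rightarrow> bool" where
  "connected_on E S \<longleftrightarrow>
     (\<forall>u\<in>S. \<forall>v\<in>S. (\<lambda>x y. x \<in> S \<and> y \<in> S \<and> {x, y} \<in> E)\<^sup>*\<^sup>* u v)"

definition connected_graph :: "'a set \<Rightarrow> 'a set set \<Rightarrow> bool" where
  "connected_graph V E \<longleftrightarrow> simple_graph V E \<and> V \<noteq> {} \<and> connected_on E V"

inductive_set zf_closure :: "'a set \<Rightarrow> 'a set set \<Rightarrow> 'a set \<Rightarrow> 'a set"
  for V :: "'a set" and E :: "'a set set" and S :: "'a set" where
  init: "v \<in> S \<Longrightarrow> v \<in> zf_closure V E S"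
| force: "\<lbrakk>u \<in> zf_closure V E S; u \<in> V; v \<in> V; {u, v} \<in> E;
           \<forall>w\<in>V. {u, w} \<in> E \<and> w \<noteq> v \<longrightarrow> w \<in> zf_closure V E S\<rbrakk>
          \<Longrightarrow> v \<in> zf_closure V E S"

definition zero_forcing_set :: "'a set \<Rightarrow> 'a set set \<Rightarrow> 'a set \<Rightarrow> bool" where
  "zero_forcing_set V E S \<longleftrightarrow> S \<subseteq> V \<and> zf_closure V E S = V"

definition connected_forcing_set :: "'a set \<Rightarrow> 'a set set \<Rightarrow> 'a set \<Rightarrow> bool" where
  "connected_forcing_set V E S \<longleftrightarrow> zero_forcing_set V E S \<and> connected_on E S"

definition Zc :: "'a set \<Rightarrow> 'a set set \<Rightarrow> nat" where
  "Zc V E = (LEAST n. \<exists>S. connected_forcing_set V E S \<and> card S = n)"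

definition non_cut_edge :: "'a set \<Rightarrow> 'a set set \<Rightarrow> 'a set \<Rightarrow> bool" where
  "non_cut_edge V E e \<longleftrightarrow> e \<in> E \<and> connected_graph V (E - {e})"

definition zc_spread :: "'a set \<Rightarrow> 'a set set \<Rightarrow> 'a set \<Rightarrow> int" where
  "zc_spread V E e = int (Zc V E) - int (Zc V (E - {e}))"

end

theory Submission
  imports Defs
begin

lemma closure_sub: "zf_closure V E S \<subseteq> V \<union> S"
proof
  fix x assume "x \<in> zf_closure V E S" then show "x \<in> V \<union> S"
    by (induction rule: zf_closure.induct) auto
qed

definition fort :: "'a set \<Rightarrow> 'a set set \<Rightarrow> 'a set \<Rightarrow> bool" where
  "fort V E F \<longleftrightarrow> F \<subseteq> V \<and> F \<noteq> {} \<and>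
     (\<forall>w\<in>V - F. \<forall>v\<in>F. {w,v} \<in> E \<longrightarrow> (\<exists>v'\<in>F. v' \<noteq> v \<and> {w,v'} \<in> E))"

lemma fort_avoid:
  assumes "fort V E F" "S \<inter> F = {}" "x \<in> zf_closure V E S"
  shows "x \<notin> F"
  using assms(3)
proof (induction rule: zf_closure.induct)
  case (init v) then show ?case using assms(2) by auto
next
  case (force u v)
  show ?case
  proof
    assume "v \<in> F"
    then obtain v' where "v' \<in> F" "v' \<noteq> v" "{u,v'} \<in> E"
      using assms(1) force unfolding fort_def by blast
    moreover have "v' \<in> V" using assms(1) \<open>v' \<in> F\<close> unfolding fort_def by auto
    ultimately show False using force by blast
  qed
qed

lemma fort_hit:
  assumes "fort V E F" "zero_forcing_set V E S"
  shows "S \<inter> F \<noteq> {}"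
proof
  assume h: "S \<inter> F = {}"
  from assms(1) obtain x where "x \<in> F" "x \<in> V" unfolding fort_def by auto
  then have "x \<in> zf_closure V E S" using assms(2) unfolding zero_forcing_set_def by auto
  then show False using fort_avoid[OF assms(1) h] \<open>x \<in> F\<close> by blast
qed

lemma cut_in:
  assumes "connected_on E S" "x \<in> S" "y \<in> S" "x \<in> X" "y \<notin> X" "p \<notin> X"
    "\<forall>s t. {s,t} \<in> E \<and> s \<in> X \<and> t \<notin> X \<longrightarrow> t = p"
  shows "p \<in> S"
proof (rule ccontr)
  assume np: "p \<notin> S"
  let ?R = "\<lambda>x y. x \<in> S \<and> y \<in> S \<and> {x, y} \<in> E"
  have r: "?R\<^sup>*\<^sup>* x y" using assms(1-3) unfolding connected_on_def by blast
  have "?R\<^sup>*\<^sup>* x z \<Longrightarrow> z \<in> X" for z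
  proof (induction rule: rtranclp_induct)
    case base then show ?case using assms(4) .
  next
    case (step z w) then show ?case using assms(7) np by metis
  qed
  from this[OF r] assms(5) show False by blast
qed

lemma sym_rtranclp:
  assumes "\<And>x y. R x y \<Longrightarrow> R y x" "R\<^sup>*\<^sup>* x y" shows "R\<^sup>*\<^sup>* y x"
  using assms(2)
proof (induction rule: rtranclp_induct)
  case base then show ?case by simp
next
  case (step y z) then show ?case using assms(1) converse_rtranclp_into_rtranclp by metis
qed

lemma connected_onI:
  assumes "r \<in> S" "\<forall>v\<in>S. (\<lambda>x y. x \<in> S \<and> y \<in> S \<and> {x, y} \<in> E)\<^sup>*\<^sup>* v r"
  shows "connected_on E S"
proof -
  let ?R = "\<lambda>x y. x \<in> S \<and> y \<in> S \<and> {x, y} \<in> E"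
  have s: "\<And>x y. ?R x y \<Longrightarrow> ?R y x" by (simp add: insert_commute)
  show ?thesis unfolding connected_on_def
  proof (intro ballI)
    fix u v assume "u \<in> S" "v \<in> S"
    have "?R\<^sup>*\<^sup>* u r" using assms(2) \<open>u \<in> S\<close> by blast
    moreover have "?R\<^sup>*\<^sup>* r v" using assms(2) \<open>v \<in> S\<close> sym_rtranclp[of ?R, OF s] by blast
    ultimately show "?R\<^sup>*\<^sup>* u v" by simp
  qed
qed

lemma connected_on_mono:
  assumes "connected_on E S" "E \<subseteq> E'" shows "connected_on E' S"
  using assms unfolding connected_on_def
  by (smt (verit, best) mono_rtranclp subsetD)


definition VV :: "nat \<Rightarrow> nat set" where "VV L = {0..L+4}"
definition TT :: "nat \<Rightarrow> nat set set" where
  "TT L = {{i, Suc i} | i. i < L} \<union> {{0,L+1},{L+1,L+2},{L,L+3},{L,L+4}}"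
definition E1 :: "nat \<Rightarrow> nat set set" where "E1 L = insert {0, L+2} (TT L)"
definition E2 :: "nat \<Rightarrow> nat set set" where "E2 L = insert {L+2, L+3} (E1 L)"

lemma TT_edge: "{u,w} \<in> TT L \<longleftrightarrow> (u < L \<and> w = Suc u) \<or> (w < L \<and> u = Suc w) \<or>
   (u = 0 \<and> w = L+1) \<or> (u = L+1 \<and> w = 0) \<or> (u = L+1 \<and> w = L+2) \<or> (u = L+2 \<and> w = L+1) \<or>
   (u = L \<and> w = L+3) \<or> (u = L+3 \<and> w = L) \<or> (u = L \<and> w = L+4) \<or> (u = L+4 \<and> w = L)"
  unfolding TT_def by (auto simp: doubleton_eq_iff)

lemma E1_edge: "{u,w} \<in> E1 L \<longleftrightarrow> {u,w} \<in> TT L \<or> (u = 0 \<and> w = L+2) \<or> (u = L+2 \<and> w = 0)"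
  unfolding E1_def by (auto simp: doubleton_eq_iff)

lemma E2_edge: "{u,w} \<in> E2 L \<longleftrightarrow> {u,w} \<in> E1 L \<or> (u = L+3 \<and> w = L+2) \<or> (u = L+2 \<and> w = L+3)"
  unfolding E2_def by (auto simp: doubleton_eq_iff)

lemma TT_simple: "simple_graph (VV L) (TT L)"
  unfolding simple_graph_def
proof (intro conjI ballI)
  show "finite (VV L)" by (simp add: VV_def)
  fix e assume "e \<in> TT L"
  then obtain u w where e: "e = {u,w}" "u \<noteq> w" "u \<le> L+4" "w \<le> L+4"
    unfolding TT_def by auto
  then show "e \<subseteq> VV L" by (auto simp: VV_def)
  show "card e = 2" using e by simp
qed

lemma E1_simple: "simple_graph (VV L) (E1 L)"
  using TT_simple unfolding simple_graph_def E1_def VV_def by auto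

lemma E2_simple: "simple_graph (VV L) (E2 L)"
  using E1_simple unfolding simple_graph_def E2_def VV_def by auto

lemma TT_conn: "connected_on (TT L) (VV L)"
proof (rule connected_onI[where r=0])
  show "0 \<in> VV L" by (simp add: VV_def)
  let ?R = "\<lambda>x y. x \<in> VV L \<and> y \<in> VV L \<and> {x, y} \<in> TT L"
  have p: "i \<le> L \<Longrightarrow> ?R\<^sup>*\<^sup>* i 0" for i
  proof (induction i)
    case 0 then show ?case by simp
  next
    case (Suc i)
    have r: "?R (Suc i) i" using Suc.prems by (simp add: VV_def TT_edge)
    have "?R\<^sup>*\<^sup>* i 0" using Suc by simp
    with r show ?case by (rule converse_rtranclp_into_rtranclp)
  qed
  have a: "?R\<^sup>*\<^sup>* (L+1) 0" by (rule r_into_rtranclp) (simp add: VV_def TT_edge)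
  have b: "?R\<^sup>*\<^sup>* (L+2) 0"
    by (rule converse_rtranclp_into_rtranclp[OF _ a]) (simp add: VV_def TT_edge)
  have c: "?R\<^sup>*\<^sup>* (L+3) 0"
    by (rule converse_rtranclp_into_rtranclp[OF _ p[OF order_refl]]) (simp add: VV_def TT_edge)
  have d: "?R\<^sup>*\<^sup>* (L+4) 0"
    by (rule converse_rtranclp_into_rtranclp[OF _ p[OF order_refl]]) (simp add: VV_def TT_edge)
  show "\<forall>v\<in>VV L. ?R\<^sup>*\<^sup>* v 0"
  proof
    fix v assume "v \<in> VV L"
    then have "v \<le> L \<or> v = L+1 \<or> v = L+2 \<or> v = L+3 \<or> v = L+4" by (auto simp: VV_def)
    then show "?R\<^sup>*\<^sup>* v 0" using p a b c d by blast
  qed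
qed

lemma E1_conn: "connected_on (E1 L) (VV L)"
  by (rule connected_on_mono[OF TT_conn]) (auto simp: E1_def)
lemma E2_conn: "connected_on (E2 L) (VV L)"
  by (rule connected_on_mono[OF E1_conn]) (auto simp: E2_def)

lemma E1_minus: "E1 L - {{0, L+2}} = TT L"
proof -
  have "{0, L+2} \<notin> TT L" by (simp only: TT_edge) simp
  then show ?thesis unfolding E1_def by auto
qed

lemma E2_minus: "E2 L - {{L+2, L+3}} = E1 L"
proof -
  have "{L+2, L+3} \<notin> E1 L" by (simp only: E1_edge TT_edge) simp
  then show ?thesis unfolding E2_def by auto
qed


lemma chain:
  assumes L: "L \<ge> 1" and cl: "L \<in> zf_closure V E S" "L+3 \<in> zf_closure V E S" "L+4 \<in> zf_closure V E S"
    and VV: "V = VV L"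
    and nL: "\<And>w. {L,w} \<in> E \<Longrightarrow> w = L-1 \<or> w = L+3 \<or> w = L+4"
    and nu: "\<And>u w. 1 \<le> u \<Longrightarrow> u < L \<Longrightarrow> {u,w} \<in> E \<Longrightarrow> w = u-1 \<or> w = u+1"
    and pe: "\<And>u. u < L \<Longrightarrow> {u, Suc u} \<in> E"
  shows "k \<le> L \<Longrightarrow> \<forall>j\<le>k. L - j \<in> zf_closure V E S"
proof (induction k)
  case 0 then show ?case using cl by simp
next
  case (Suc k)
  then have IH: "\<forall>j\<le>k. L - j \<in> zf_closure V E S" by simp
  have "L - Suc k \<in> zf_closure V E S"
  proof (rule zf_closure.force[of "L - k"])
    show "L - k \<in> zf_closure V E S" using IH by simp
    show "L - k \<in> V" "L - Suc k \<in> V" using VV by (auto simp: VV_def)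
    have "{L - Suc k, Suc (L - Suc k)} \<in> E" using pe Suc.prems by simp
    moreover have "Suc (L - Suc k) = L - k" using Suc.prems by simp
    ultimately show "{L - k, L - Suc k} \<in> E" by (simp add: insert_commute)
    show "\<forall>w\<in>V. {L - k, w} \<in> E \<and> w \<noteq> L - Suc k \<longrightarrow> w \<in> zf_closure V E S"
    proof (intro ballI impI)
      fix w assume w: "w \<in> V" "{L - k, w} \<in> E \<and> w \<noteq> L - Suc k"
      show "w \<in> zf_closure V E S"
      proof (cases "k = 0")
        case True
        then show ?thesis using nL[of w] w cl Suc.prems by auto
      next
        case False
        then have "w = L - k - 1 \<or> w = L - k + 1" using nu[of "L-k" w] w Suc.prems by auto
        then have "w = L - (k - 1)" using w False Suc.prems by auto
        then show ?thesis using IH by simp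
      qed
    qed
  qed
  then show ?case using IH le_Suc_eq by auto
qed

lemma Zc_le: "connected_forcing_set V E S \<Longrightarrow> Zc V E \<le> card S"
  unfolding Zc_def by (rule Least_le) blast

lemma set3: "L \<ge> 1 \<Longrightarrow> card {L, L+3, L+4::nat} = 3" by simp

lemma conn3:
  assumes "{L, L+3} \<in> E" "{L, L+4} \<in> E" shows "connected_on E {L, L+3, L+4::nat}"
proof (rule connected_onI[where r = L])
  show "\<forall>v\<in>{L, L + 3, L + 4}. (\<lambda>x y. x \<in> {L, L + 3, L + 4} \<and> y \<in> {L, L + 3, L + 4} \<and> {x, y} \<in> E)\<^sup>*\<^sup>* v L"
    using assms by (auto simp: insert_commute intro!: r_into_rtranclp)
qed simp

lemma TT_upper: assumes L: "L \<ge> 1" shows "Zc (VV L) (TT L) \<le> 3"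
proof -
  let ?S = "{L, L+3, L+4}"
  let ?C = "zf_closure (VV L) (TT L) ?S"
  have cl: "L \<in> ?C" "L+3 \<in> ?C" "L+4 \<in> ?C" by (auto intro: zf_closure.init)
  have path: "\<forall>j\<le>L. L - j \<in> ?C"
    by (rule chain[OF L cl refl, of L]) (use L in \<open>auto simp: TT_edge\<close>)
  have p: "i \<le> L \<Longrightarrow> i \<in> ?C" for i using path[rule_format, of "L - i"] by simp
  have a: "L+1 \<in> ?C"
  proof (rule zf_closure.force[of 0])
    show "0 \<in> ?C" using p by simp
  qed (use p L in \<open>auto simp: VV_def TT_edge\<close>)
  have b: "L+2 \<in> ?C"
  proof (rule zf_closure.force[of "L+1"])
    show "L+1 \<in> ?C" using a by simp
  qed (use p L in \<open>auto simp: VV_def TT_edge\<close>)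
  have "?C = VV L"
  proof
    show "?C \<subseteq> VV L" using closure_sub[of "VV L" "TT L" ?S] by (auto simp: VV_def)
    show "VV L \<subseteq> ?C"
    proof
      fix v assume "v \<in> VV L"
      then have "v \<le> L \<or> v = L+1 \<or> v = L+2 \<or> v = L+3 \<or> v = L+4" by (auto simp: VV_def)
      then show "v \<in> ?C" using p a b cl by blast
    qed
  qed
  then have "connected_forcing_set (VV L) (TT L) ?S"
    unfolding connected_forcing_set_def zero_forcing_set_def
    using conn3[of L "TT L"] by (auto simp: VV_def TT_edge)
  then have "Zc (VV L) (TT L) \<le> card ?S" by (rule Zc_le)
  then show ?thesis using set3[OF L] by simp
qed

lemma E2_upper: assumes L: "L \<ge> 1" shows "Zc (VV L) (E2 L) \<le> 3"
proof -
  let ?S = "{L, L+3, L+4}"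
  let ?C = "zf_closure (VV L) (E2 L) ?S"
  have cl: "L \<in> ?C" "L+3 \<in> ?C" "L+4 \<in> ?C" by (auto intro: zf_closure.init)
  have path: "\<forall>j\<le>L. L - j \<in> ?C"
    by (rule chain[OF L cl refl, of L]) (use L in \<open>auto simp: E2_edge E1_edge TT_edge\<close>)
  have p: "i \<le> L \<Longrightarrow> i \<in> ?C" for i using path[rule_format, of "L - i"] by simp
  have b: "L+2 \<in> ?C"
  proof (rule zf_closure.force[of "L+3"])
    show "L+3 \<in> ?C" using cl by simp
  qed (use p L in \<open>auto simp: VV_def E2_edge E1_edge TT_edge\<close>)
  have a: "L+1 \<in> ?C"
  proof (rule zf_closure.force[of "L+2"])
    show "L+2 \<in> ?C" using b by simp
  qed (use p cl L in \<open>auto simp: VV_def E2_edge E1_edge TT_edge\<close>)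
  have "?C = VV L"
  proof
    show "?C \<subseteq> VV L" using closure_sub[of "VV L" "E2 L" ?S] by (auto simp: VV_def)
    show "VV L \<subseteq> ?C"
    proof
      fix v assume "v \<in> VV L"
      then have "v \<le> L \<or> v = L+1 \<or> v = L+2 \<or> v = L+3 \<or> v = L+4" by (auto simp: VV_def)
      then show "v \<in> ?C" using p a b cl by blast
    qed
  qed
  then have "connected_forcing_set (VV L) (E2 L) ?S"
    unfolding connected_forcing_set_def zero_forcing_set_def
    using conn3[of L "E2 L"] by (auto simp: VV_def E2_edge E1_edge TT_edge)
  then have "Zc (VV L) (E2 L) \<le> card ?S" by (rule Zc_le)
  then show ?thesis using set3[OF L] by simp
qed


lemma E1_lower: "Zc (VV L) (E1 L) \<ge> L + 3"
proof -
  have ex: "\<exists>S. connected_forcing_set (VV L) (E1 L) S"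
  proof
    have "zf_closure (VV L) (E1 L) (VV L) = VV L"
      using closure_sub[of "VV L" "E1 L" "VV L"] by (auto intro: zf_closure.init)
    then show "connected_forcing_set (VV L) (E1 L) (VV L)"
      unfolding connected_forcing_set_def zero_forcing_set_def using E1_conn by auto
  qed
  have "\<exists>S. connected_forcing_set (VV L) (E1 L) S \<and> card S = Zc (VV L) (E1 L)"
    unfolding Zc_def by (rule LeastI_ex) (use ex in blast)
  then obtain S where S: "connected_forcing_set (VV L) (E1 L) S" "card S = Zc (VV L) (E1 L)"
    by blast
  have zf: "zero_forcing_set (VV L) (E1 L) S" and cS: "connected_on (E1 L) S"
    using S(1) unfolding connected_forcing_set_def by auto
  have fab: "fort (VV L) (E1 L) {L+1, L+2}"
    unfolding fort_def by (auto simp: VV_def E1_edge TT_edge)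
  have fcd: "fort (VV L) (E1 L) {L+3, L+4}"
    unfolding fort_def by (auto simp: VV_def E1_edge TT_edge)
  obtain x where x: "x \<in> S" "x = L+1 \<or> x = L+2" using fort_hit[OF fab zf] by auto
  obtain y where y: "y \<in> S" "y = L+3 \<or> y = L+4" using fort_hit[OF fcd zf] by auto
  have path: "i \<in> S" if i: "i \<le> L" for i
  proof (rule cut_in[OF cS x(1) y(1), of "{j. j < i} \<union> {L+1, L+2}"])
    show "x \<in> {j. j < i} \<union> {L+1, L+2}" using x by auto
    show "y \<notin> {j. j < i} \<union> {L+1, L+2}" using y i by auto
    show "i \<notin> {j. j < i} \<union> {L+1, L+2}" using i by auto
    show "\<forall>s t. {s, t} \<in> E1 L \<and> s \<in> {j. j < i} \<union> {L+1, L+2} \<and> t \<notin> {j. j < i} \<union> {L+1, L+2} \<longrightarrow> t = i"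
      using i by (auto simp: E1_edge TT_edge)
  qed
  have sub: "{0..L} \<union> {x, y} \<subseteq> S" using path x y by auto
  have fin: "finite S" using zf unfolding zero_forcing_set_def VV_def by (auto intro: finite_subset)
  have "card ({0..L} \<union> {x, y}) = L + 3" using x y by auto
  then show ?thesis using card_mono[OF fin sub] S(2) by simp
qed

theorem proposition2:
  fixes c1 c2 :: real
  assumes "c1 < 0" and "c2 > 0"
  shows "\<exists>(V1 :: nat set) E1 e1 (V2 :: nat set) E2 e2.
           connected_graph V1 E1 \<and> non_cut_edge V1 E1 e1 \<and>
           connected_graph V2 E2 \<and> non_cut_edge V2 E2 e2 \<and>
           real_of_int (zc_spread V1 E1 e1) < c1 \<and>
           real_of_int (zc_spread V2 E2 e2) > c2"
proof -
  define L where "L = nat \<lceil>max c2 (- c1)\<rceil> + 1"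
  have L1: "L \<ge> 1" by (simp add: L_def)
  have Lr: "real L > c2" "real L > - c1" unfolding L_def by linarith+
  have VVne: "VV L \<noteq> {}" by (simp add: VV_def)
  have g1: "connected_graph (VV L) (E1 L)" "connected_graph (VV L) (E2 L)" "connected_graph (VV L) (TT L)"
    unfolding connected_graph_def using E1_simple E2_simple TT_simple E1_conn E2_conn TT_conn VVne by auto
  have n1: "non_cut_edge (VV L) (E2 L) {L+2, L+3}"
    unfolding non_cut_edge_def E2_minus using g1 by (simp add: E2_def)
  have n2: "non_cut_edge (VV L) (E1 L) {0, L+2}"
    unfolding non_cut_edge_def E1_minus using g1 by (simp add: E1_def)
  have s1: "real_of_int (zc_spread (VV L) (E2 L) {L+2, L+3}) < c1"
    unfolding zc_spread_def E2_minus using E2_upper[OF L1] E1_lower[of L] Lr by linarith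
  have s2: "real_of_int (zc_spread (VV L) (E1 L) {0, L+2}) > c2"
    unfolding zc_spread_def E1_minus using TT_upper[OF L1] E1_lower[of L] Lr by linarith
  show ?thesis using g1 n1 n2 s1 s2 by blast
qed

end
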